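(* Let $\epsilon,\mu>0$ be constants, $0<k_{min}<k_{max}$, $K:=(k_{min},k_{max})$, and for $k\in K$ let $\omega:=k/\sqrt{\epsilon\mu}$. For a source $\mathbf{J}\in(L^\infty(\mathbb{R}^3))^3$ with compact support let $$\mathbf{E}^\infty(\hat{\mathbf{x}},k;\mathbf{J})=i\omega\mu(\mathbb{I}-\hat{\mathbf{x}}\hat{\mathbf{x}}^{\rm T})\int_{\mathbb{R}^3}e^{-ik\hat{\mathbf{x}}\cdot\mathbf{y}}\mathbf{J}(\mathbf{y})\,d\mathbf{y}$$ be the electric far field pattern of the radiating solution of $\mathrm{curl}\,\mathrm{curl}\,\mathbf{E}-k^2\mathbf{E}=i\omega\mu\mathbf{J}$. Fix a point $\mathbf{z}_0\in\mathbb{R}^3$ and, for $\tau\in\mathbb{C}$ and $\mathbf{p}\in\mathbb{S}^2$, set $$\mathbf{E}^\infty_{\mathbf{z}_0}(\hat{\mathbf{x}},k;\mathbf{J},\tau,\mathbf{p}):=\mathbf{E}^\infty(\hat{\mathbf{x}},k;\mathbf{J})+ik\tau e^{-ik\hat{\mathbf{x}}\cdot\mathbf{z}_0}\,\hat{\mathbf{x}}\times\mathbf{p}$$ (the far field of the source $\mathbf{J}$ plus a magnetic dipole at $\mathbf{z}_0$ with strength $\tau$ and polarization $\mathbf{p}$). Let $\mathcal{T}=\{\tau_1,\tau_2,\tau_3\}\subset\mathbb{C}$ consist of three distinct numbers such that $\tau_2-\tau_1$ and $\tau_3-\tau_1$ are linearly independent (over $\mathbb{R}$). Fix $\hat{\mathbf{x}}_0\in\mathbb{S}^2$,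 choose $\mathbf{q}_0\in\mathbb{S}^2$ with $\hat{\mathbf{x}}_0\times\mathbf{q}_0\neq0$, and set $\mathbf{l}:=\hat{\mathbf{x}}_0\times\mathbf{q}_0/|\hat{\mathbf{x}}_0\times\mathbf{q}_0|$, $\mathbf{m}:=\hat{\mathbf{x}}_0\times\mathbf{l}$. For a source $\mathbf{J}$ with support $D$, define $$S(\hat{\mathbf{x}}_0;\mathbf{J}):=\{\mathbf{y}\in\mathbb{R}^3:\ \inf_{\mathbf{z}\in D}\mathbf{z}\cdot\hat{\mathbf{x}}_0\le\mathbf{y}\cdot\hat{\mathbf{x}}_0\le\sup_{\mathbf{z}\in D}\mathbf{z}\cdot\hat{\mathbf{x}}_0\},$$ $\Pi_\alpha:=\{\mathbf{y}\in\mathbb{R}^3:\ \mathbf{y}\cdot\hat{\mathbf{x}}_0+\alpha=0\}$ and $\hat{J}_{\mathbf{m}}(\alpha):=\int_{\Pi_\alpha}\mathbf{m}\cdot\mathbf{J}(\mathbf{y})\,ds(\mathbf{y})$ for $\alpha\in\mathbb{R}$. If the set $$\{\alpha\in\mathbb{R}:\ \Pi_\alpha\subset S(\hat{\mathbf{x}}_0;\mathbf{J}),\ \hat{J}_{\mathbf{m}}(\alpha)=0\}$$ has Lebesgue measure zero, then the strip $S(\hat{\mathbf{x}}_0;\mathbf{J})$ is uniquely determined by the phaseless data $|\mathbf{m}\cdot\mathbf{E}^\infty_{\mathbf{z}_0}(\hat{\mathbf{x}}_0,k;\mathbf{J},\tau,\mathbf{l})|$ for all $k\in K$, $\tau\in\mathcal{T}$.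 That is: if $\mathbf{J}_1,\mathbf{J}_2$ are two such sources, each satisfying the measure-zero condition, and $|\mathbf{m}\cdot\mathbf{E}^\infty_{\mathbf{z}_0}(\hat{\mathbf{x}}_0,k;\mathbf{J}_1,\tau,\mathbf{l})|=|\mathbf{m}\cdot\mathbf{E}^\infty_{\mathbf{z}_0}(\hat{\mathbf{x}}_0,k;\mathbf{J}_2,\tau,\mathbf{l})|$ for all $k\in K$ and $\tau\in\mathcal{T}$, then $S(\hat{\mathbf{x}}_0;\mathbf{J}_1)=S(\hat{\mathbf{x}}_0;\mathbf{J}_2)$.
   Context: $\mathbb{I}$ is the $3\times3$ identity matrix, $\mathbb{S}^2$ the unit sphere; $D$ denotes the support of $\mathbf{J}$; $ds$ is surface measure on $\Pi_\alpha$. Complex numbers are identified with points of $\mathbb{R}^2$ for the linear independence condition on $\tau_2-\tau_1,\tau_3-\tau_1$. *)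

theory Defs
  imports "HOL-Analysis.Analysis" "HOL-Analysis.Cross3"
begin

text \<open>Bilinear dot product of a real vector with a complex vector (no conjugation).\<close>
definition cdot :: "real^3 \<Rightarrow> complex^3 \<Rightarrow> complex" where
  "cdot a v = (\<Sum>j\<in>UNIV. complex_of_real (a $ j) * v $ j)"

definition cvec :: "real^3 \<Rightarrow> complex^3" where
  "cvec a = (\<chi> j. complex_of_real (a $ j))"

definition far_field :: "real \<Rightarrow> real \<Rightarrow> real \<Rightarrow> real^3 \<Rightarrow> (real^3 \<Rightarrow> complex^3) \<Rightarrow> complex^3" where
  "far_field eps mu k xh J =
     (let \<omega> = k / sqrt (eps * mu);
          F = (LINT y|lborel. exp (- \<i> * complex_of_real (k * (xh \<bullet> y))) *s J y)
      in (\<i> * complex_of_real (\<omega> * mu)) *s (F - cdot xh F *s cvec xh))"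

definition far_field_dip ::
  "real \<Rightarrow> real \<Rightarrow> real^3 \<Rightarrow> real^3 \<Rightarrow> real \<Rightarrow> (real^3 \<Rightarrow> complex^3) \<Rightarrow> complex \<Rightarrow> real^3 \<Rightarrow> complex^3" where
  "far_field_dip eps mu z0 xh k J \<tau> p =
     far_field eps mu k xh J
     + (\<i> * complex_of_real k * \<tau> * exp (- \<i> * complex_of_real (k * (xh \<bullet> z0)))) *s cvec (cross3 xh p)"

text \<open>Support of an L^infinity function (essential support; independent of the representative).\<close>
definition esssupp :: "(real^3 \<Rightarrow> complex^3) \<Rightarrow> (real^3) set" where
  "esssupp J = {x. \<forall>e>0. emeasure lborel {y \<in> ball x e. J y \<noteq> 0} \<noteq> 0}"

text \<open>Admissible sources: (a Borel representative of) an element of (L^infinity(R^3))^3 with compact support.\<close>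
definition source :: "(real^3 \<Rightarrow> complex^3) \<Rightarrow> bool" where
  "source J \<longleftrightarrow> J \<in> borel_measurable lborel \<and> (\<exists>C. AE y in lborel. norm (J y) \<le> C)
      \<and> compact (esssupp J)"

text \<open>The strip S(xh;J), with inf/sup taken in the extended reals (empty if the support is empty).\<close>
definition strip :: "real^3 \<Rightarrow> (real^3 \<Rightarrow> complex^3) \<Rightarrow> (real^3) set" where
  "strip xh J = {y. (INF z\<in>esssupp J. ereal (z \<bullet> xh)) \<le> ereal (y \<bullet> xh)
                   \<and> ereal (y \<bullet> xh) \<le> (SUP z\<in>esssupp J. ereal (z \<bullet> xh))}"

definition plane :: "real^3 \<Rightarrow> real \<Rightarrow> (real^3) set" where
  "plane xh \<alpha> = {y. y \<bullet> xh + \<alpha> = 0}"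

text \<open>Plane integral int_{Pi_alpha} m . J ds, with Pi_alpha parametrized isometrically by
  (s,t) |-> -alpha xh + s l + t m, where (xh,l,m) is an orthonormal frame.\<close>
definition Jhat :: "real^3 \<Rightarrow> real^3 \<Rightarrow> real^3 \<Rightarrow> (real^3 \<Rightarrow> complex^3) \<Rightarrow> real \<Rightarrow> complex" where
  "Jhat xh l m J \<alpha> =
     (LINT st|(lborel :: (real \<times> real) measure).
        cdot m (J ((- \<alpha>) *\<^sub>R xh + fst st *\<^sub>R l + snd st *\<^sub>R m)))"

end

theory Submission
  imports Defs "HOL-Probability.Probability" "HOL-Complex_Analysis.Complex_Analysis"
begin

lemma integrable_iexp_mult:
  fixes f :: "real \<Rightarrow> real"
  assumes "integrable lborel f"
  shows "integrable lborel (\<lambda>x. iexp (t * x) * complex_of_real (f x))"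
proof (rule Bochner_Integration.integrable_bound[OF assms])
  show "(\<lambda>x. iexp (t * x) * complex_of_real (f x)) \<in> borel_measurable lborel"
    using assms by measurable
  show "AE x in lborel. norm (iexp (t * x) * complex_of_real (f x)) \<le> norm (f x)"
    by (simp add: norm_mult)
qed

lemma real_fourier_zero:
  fixes a :: "real \<Rightarrow> real"
  assumes ia: "integrable lborel a"
    and F: "\<And>t. (CLINT x|lborel. iexp (t * x) * complex_of_real (a x)) = 0"
  shows "AE x in lborel. a x = 0"
proof -
  have am[measurable]: "a \<in> borel_measurable lborel" using ia by auto
  define p where "p x = max (a x) 0" for x
  define q where "q x = max (- a x) 0" for x
  have ip: "integrable lborel p" unfolding p_def using ia by auto
  have iq: "integrable lborel q" unfolding q_def using ia by auto
  have pm[measurable]: "p \<in> borel_measurable lborel" "q \<in> borel_measurable lborel"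
    using ip iq by auto
  have apq: "a x = p x - q x" for x unfolding p_def q_def by auto
  have p0: "0 \<le> p x" "0 \<le> q x" for x unfolding p_def q_def by auto
  have "(CLINT x|lborel. complex_of_real (a x)) = 0" using F[of 0] by simp
  then have "integral\<^sup>L lborel a = 0" by simp
  then have pq: "integral\<^sup>L lborel p = integral\<^sup>L lborel q"
    using ip iq by (simp add: apq[abs_def])
  define c where "c = integral\<^sup>L lborel p"
  have c0: "0 \<le> c" unfolding c_def using p0 by (simp add: integral_nonneg_AE)
  show ?thesis
  proof (cases "c = 0")
    case True
    have "AE x in lborel. p x = 0"
      using integral_nonneg_eq_0_iff_AE[OF ip] True p0 unfolding c_def by auto
    moreover have "AE x in lborel. q x = 0"
      using integral_nonneg_eq_0_iff_AE[OF iq] True p0 pq unfolding c_def by auto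
    ultimately show ?thesis by eventually_elim (simp add: apq)
  next
    case False
    then have cp: "0 < c" using c0 by simp
    define M1 where "M1 = density lborel (\<lambda>x. ennreal (p x / c))"
    define M2 where "M2 = density lborel (\<lambda>x. ennreal (q x / c))"
    have rd: "real_distribution (density lborel (\<lambda>x. ennreal (f x / c)))"
      if fi: "integrable lborel f" and f0: "\<And>x. 0 \<le> f x" and fc: "integral\<^sup>L lborel f = c" for f
    proof -
      have fm[measurable]: "f \<in> borel_measurable lborel" using fi by auto
      have "emeasure (density lborel (\<lambda>x. ennreal (f x / c))) UNIV = (\<integral>\<^sup>+x. ennreal (f x / c) \<partial>lborel)"
        by (simp add: emeasure_density)
      also have "\<dots> = ennreal (integral\<^sup>L lborel (\<lambda>x. f x / c))"
        by (rule nn_integral_eq_integral) (use fi f0 cp in auto)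
      also have "\<dots> = 1" using fc cp by simp
      finally have "emeasure (density lborel (\<lambda>x. ennreal (f x / c))) UNIV = 1" .
      then have "prob_space (density lborel (\<lambda>x. ennreal (f x / c)))"
        by (intro prob_spaceI) simp
      then show ?thesis
        by (simp add: real_distribution_def real_distribution_axioms_def)
    qed
    have r1: "real_distribution M1" unfolding M1_def by (rule rd[OF ip p0(1)]) (simp add: c_def)
    have r2: "real_distribution M2" unfolding M2_def by (rule rd[OF iq p0(2)]) (simp add: c_def pq)
    have chr: "char (density lborel (\<lambda>x. ennreal (f x / c))) t
        = (CLINT x|lborel. iexp (t * x) * complex_of_real (f x)) / c"
      if fi: "integrable lborel f" and f0: "\<And>x. 0 \<le> f x" for f t
    proof -
      have fm[measurable]: "f \<in> borel_measurable lborel" using fi by auto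
      have "char (density lborel (\<lambda>x. ennreal (f x / c))) t
          = (CLINT x|lborel. (f x / c) *\<^sub>R iexp (t * x))"
        unfolding char_def
        by (rule integral_density) (use f0 cp in auto)
      also have "\<dots> = (CLINT x|lborel. (iexp (t * x) * complex_of_real (f x)) / c)"
        by (intro Bochner_Integration.integral_cong) (auto simp: scaleR_conv_of_real)
      also have "\<dots> = (CLINT x|lborel. iexp (t * x) * complex_of_real (f x)) / c"
        by (rule integral_divide_zero)
      finally show ?thesis .
    qed
    have "char M1 = char M2"
    proof
      fix t
      have "(CLINT x|lborel. iexp (t * x) * complex_of_real (p x))
          - (CLINT x|lborel. iexp (t * x) * complex_of_real (q x))
          = (CLINT x|lborel. iexp (t * x) * complex_of_real (a x))"
        by (subst Bochner_Integration.integral_diff[OF integrable_iexp_mult[OF ip] integrable_iexp_mult[OF iq], symmetric])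
          (auto intro!: Bochner_Integration.integral_cong simp: apq algebra_simps)
      then show "char M1 t = char M2 t"
        unfolding M1_def M2_def using F[of t]
        by (simp add: chr[OF ip p0(1)] chr[OF iq p0(2)])
    qed
    then have "M1 = M2" by (rule Levy_uniqueness[OF r1 r2])
    then have "AE x in lborel. ennreal (p x / c) = ennreal (q x / c)"
      unfolding M1_def M2_def by (intro sigma_finite_measure.density_unique[OF sigma_finite_lborel]) auto
    then show ?thesis
    proof eventually_elim
      case (elim x)
      then have "p x / c = q x / c" using p0[of x] cp
        by (subst (asm) ennreal_inj) auto
      then show ?case using cp by (simp add: apq)
    qed
  qed
qed


lemma integrable_iexp_multc:
  fixes f :: "real \<Rightarrow> complex"
  assumes "integrable lborel f"
  shows "integrable lborel (\<lambda>x. iexp (t * x) * f x)"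
proof (rule Bochner_Integration.integrable_bound[OF assms])
  show "(\<lambda>x. iexp (t * x) * f x) \<in> borel_measurable lborel"
    using assms by measurable
  show "AE x in lborel. norm (iexp (t * x) * f x) \<le> norm (f x)"
    by (simp add: norm_mult)
qed

lemma re_im_fourier:
  fixes w :: "real \<Rightarrow> complex"
  assumes iw: "integrable lborel w"
    and F: "\<And>t. (CLINT x|lborel. iexp (t * x) * w x) = 0"
  shows "(CLINT x|lborel. iexp (t * x) * complex_of_real (Re (w x))) = 0"
proof -
  have i1: "integrable lborel (\<lambda>x. iexp (t * x) * w x)" by (rule integrable_iexp_multc[OF iw])
  have i2: "integrable lborel (\<lambda>x. cnj (iexp ((-t) * x) * w x))"
    using integrable_cnj[OF integrable_iexp_multc[OF iw, of "-t"]] by simp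
  have cnj0: "(CLINT x|lborel. cnj (iexp ((-t) * x) * w x)) = 0"
    by (subst Bochner_Integration.integral_cnj) (simp only: F complex_cnj_zero)
  have c: "cnj (iexp ((-t) * x) * w x) = iexp (t * x) * cnj (w x)" for x
    by (simp add: exp_cnj)
  have "(CLINT x|lborel. iexp (t * x) * complex_of_real (Re (w x)))
      = (CLINT x|lborel. (iexp (t * x) * w x + cnj (iexp ((-t) * x) * w x)) / 2)"
    by (intro Bochner_Integration.integral_cong refl, simp only: c)
      (simp add: distrib_left[symmetric] complex_add_cnj)
  also have "\<dots> = ((CLINT x|lborel. iexp (t * x) * w x) + (CLINT x|lborel. cnj (iexp ((-t) * x) * w x))) / 2"
    by (simp only: integral_divide_zero Bochner_Integration.integral_add[OF i1 i2])
  also have "\<dots> = 0" using F[of t] cnj0 by simp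
  finally show ?thesis .
qed


lemma complex_fourier_zero:
  fixes w :: "real \<Rightarrow> complex"
  assumes iw: "integrable lborel w"
    and F: "\<And>t. (CLINT x|lborel. iexp (t * x) * w x) = 0"
  shows "AE x in lborel. w x = 0"
proof -
  have "AE x in lborel. Re (w x) = 0"
    by (rule real_fourier_zero) (use integrable_bounded_linear[OF bounded_linear_Re iw] re_im_fourier[OF iw F] in auto)
  moreover
  have iw': "integrable lborel (\<lambda>x. - \<i> * w x)" using iw by simp
  have F': "(CLINT x|lborel. iexp (t * x) * (- \<i> * w x)) = 0" for t
  proof -
    have "(CLINT x|lborel. iexp (t * x) * (- \<i> * w x)) = (CLINT x|lborel. - \<i> * (iexp (t * x) * w x))"
      by (simp add: algebra_simps)
    also have "\<dots> = - \<i> * (CLINT x|lborel. iexp (t * x) * w x)" by (rule integral_mult_right_zero)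
    finally show ?thesis using F[of t] by simp
  qed
  have "AE x in lborel. Re (- \<i> * w x) = 0"
    by (rule real_fourier_zero) (use integrable_bounded_linear[OF bounded_linear_Re iw'] re_im_fourier[OF iw' F'] in auto)
  ultimately show ?thesis by eventually_elim (simp add: complex_eq_iff)
qed

lemma summable_pow_fact: "summable (\<lambda>n. (y::real) ^ n / fact n)"
  using summable_exp_generic[of y] by (simp add: divide_inverse mult.commute)

lemma fourier_interval_zero:
  fixes w :: "real \<Rightarrow> complex"
  assumes iw: "integrable lborel w"
    and Rw: "AE x in lborel. R < \<bar>x\<bar> \<longrightarrow> w x = 0"
    and ab: "a < b"
    and F: "\<And>k. a < k \<Longrightarrow> k < b \<Longrightarrow> (CLINT x|lborel. iexp (k * x) * w x) = 0"
  shows "(CLINT x|lborel. iexp (t * x) * w x) = 0"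
proof -
  define R' where "R' = max R 0"
  have R'0: "0 \<le> R'" unfolding R'_def by simp
  have Rw': "AE x in lborel. norm (w x) \<noteq> 0 \<longrightarrow> \<bar>x\<bar> \<le> R'"
    using Rw by eventually_elim (auto simp: R'_def)
  have wm[measurable]: "w \<in> borel_measurable lborel" using iw by auto
  define L where "L = (\<integral>x. norm (w x) \<partial>lborel)"
  have bnd: "AE x in lborel. norm (complex_of_real (x ^ n) * w x) \<le> R' ^ n * norm (w x)" for n
    using Rw'
  proof eventually_elim
    case (elim x)
    show ?case
    proof (cases "w x = 0")
      case False
      then have "\<bar>x\<bar> \<le> R'" using elim by auto
      then have "\<bar>x\<bar> ^ n \<le> R' ^ n" by (rule power_mono) simp
      then show ?thesis by (simp add: norm_mult norm_power mult_right_mono)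
    qed simp
  qed
  have imom: "integrable lborel (\<lambda>x. complex_of_real (x ^ n) * w x)" for n
  proof (rule Bochner_Integration.integrable_bound)
    show "integrable lborel (\<lambda>x. R' ^ n * norm (w x))" using iw by auto
    show "(\<lambda>x. complex_of_real (x ^ n) * w x) \<in> borel_measurable lborel" by measurable
    show "AE x in lborel. norm (complex_of_real (x ^ n) * w x) \<le> norm (R' ^ n * norm (w x))"
      using bnd[of n] by eventually_elim (auto simp: R'0)
  qed
  define M where "M n = (CLINT x|lborel. complex_of_real (x ^ n) * w x)" for n
  have nMint: "(\<integral>x. norm (complex_of_real (x ^ n) * w x) \<partial>lborel) \<le> R' ^ n * L" for n
  proof -
    have "(\<integral>x. norm (complex_of_real (x ^ n) * w x) \<partial>lborel) \<le> (\<integral>x. R' ^ n * norm (w x) \<partial>lborel)"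
      by (rule integral_mono_AE) (use iw imom bnd[of n] in auto)
    also have "\<dots> = R' ^ n * L" unfolding L_def by simp
    finally show ?thesis .
  qed
  have nM: "norm (M n) \<le> R' ^ n * L" for n
    unfolding M_def using integral_norm_bound[of lborel "\<lambda>x. complex_of_real (x ^ n) * w x"] nMint[of n]
    by linarith
  define c where "c n = \<i> ^ n * M n / fact n" for n
  have L0: "0 \<le> L" unfolding L_def by simp
  have summ: "summable (\<lambda>n. c n * z ^ n)" for z
  proof (rule summable_comparison_test')
    show "summable (\<lambda>n. L * ((R' * norm z) ^ n / fact n))"
      by (intro summable_mult summable_pow_fact ) 
    show "norm (c n * z ^ n) \<le> L * ((R' * norm z) ^ n / fact n)" for n
    proof -
      have "norm (c n * z ^ n) = norm (M n) * norm z ^ n / fact n"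
        by (simp add: c_def norm_mult norm_divide norm_power)
      also have "\<dots> \<le> (R' ^ n * L) * norm z ^ n / fact n"
        by (intro divide_right_mono mult_right_mono nM) auto
      also have "\<dots> = L * ((R' * norm z) ^ n / fact n)" by (simp add: power_mult_distrib)
      finally show ?thesis .
    qed
  qed
  define f where "f z = (\<Sum>n. c n * z ^ n)" for z
  have real_eq: "(CLINT x|lborel. iexp (s * x) * w x) = f (complex_of_real s)" for s
  proof -
    define g where "g n x = ((\<i> * complex_of_real (s * x)) ^ n /\<^sub>R fact n) * w x" for n x
    have ex: "iexp (s * x) * w x = (\<Sum>n. g n x)" for x
      unfolding g_def exp_def by (rule suminf_mult2) (rule summable_exp_generic)
    have gi: "integrable lborel (g n)" for n
    proof -
      have "g n = (\<lambda>x. ((\<i> * complex_of_real s) ^ n / fact n) * (complex_of_real (x ^ n) * w x))"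
        by (auto simp: g_def fun_eq_iff scaleR_conv_of_real power_mult_distrib field_simps)
      then show ?thesis using imom[of n] by simp
    qed
    have gI: "integral\<^sup>L lborel (g n) = c n * (complex_of_real s) ^ n" for n
    proof -
      have "g n = (\<lambda>x. ((\<i> * complex_of_real s) ^ n / fact n) * (complex_of_real (x ^ n) * w x))"
        by (auto simp: g_def fun_eq_iff scaleR_conv_of_real power_mult_distrib field_simps)
      then show ?thesis by (simp add: M_def c_def power_mult_distrib)
    qed
    have gn: "(\<integral>x. norm (g n x) \<partial>lborel) \<le> L * ((R' * norm s) ^ n / fact n)" for n
    proof -
      have "(\<lambda>x. norm (g n x)) = (\<lambda>x. (norm s ^ n / fact n) * norm (complex_of_real (x ^ n) * w x))"
        by (auto simp: g_def fun_eq_iff norm_mult norm_power norm_divide abs_mult power_mult_distrib divide_inverse)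
      then have "(\<integral>x. norm (g n x) \<partial>lborel) = (norm s ^ n / fact n) * (\<integral>x. norm (complex_of_real (x ^ n) * w x) \<partial>lborel)"
        by simp
      also have "\<dots> \<le> (norm s ^ n / fact n) * (R' ^ n * L)"
        by (intro mult_left_mono nMint) auto
      also have "\<dots> = L * ((R' * norm s) ^ n / fact n)" by (simp add: power_mult_distrib)
      finally show ?thesis .
    qed
    have "(CLINT x|lborel. iexp (s * x) * w x) = (\<integral>x. (\<Sum>n. g n x) \<partial>lborel)"
      by (rule Bochner_Integration.integral_cong[OF refl ex])
    also have "\<dots> = (\<Sum>n. integral\<^sup>L lborel (g n))"
    proof (rule integral_suminf)
      show "integrable lborel (g n)" for n by (rule gi)
      show "AE x in lborel. summable (\<lambda>n. norm (g n x))"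
      proof (rule AE_I2)
        fix x
        have "summable (\<lambda>n. norm ((\<i> * complex_of_real (s * x)) ^ n /\<^sub>R fact n))"
          by (rule summable_norm_exp)
        then show "summable (\<lambda>n. norm (g n x))"
          unfolding g_def norm_mult by (rule summable_mult2)
      qed
      show "summable (\<lambda>n. \<integral>x. norm (g n x) \<partial>lborel)"
      proof (rule summable_comparison_test')
        show "summable (\<lambda>n. L * ((R' * norm s) ^ n / fact n))"
          by (intro summable_mult summable_pow_fact)
        show "norm (\<integral>x. norm (g n x) \<partial>lborel) \<le> L * ((R' * norm s) ^ n / fact n)" for n
          using gn[of n] by simp
      qed
    qed
    also have "\<dots> = f (complex_of_real s)" by (simp add: gI f_def)
    finally show ?thesis .
  qed
  have hol: "f holomorphic_on UNIV"
    unfolding holomorphic_on_def field_differentiable_def f_def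
    using termdiffs_strong_converges_everywhere[OF summ] has_field_derivative_at_within by blast
  define m where "m = (a + b) / 2"
  have lim: "complex_of_real m islimpt (complex_of_real ` {a<..<b})"
    unfolding islimpt_approachable
  proof (intro allI impI)
    fix e :: real assume e: "0 < e"
    define d where "d = min e ((b - a) / 2) / 2"
    have d: "0 < d" "d < e" "m + d < b" "a < m + d"
      using e ab by (auto simp: d_def m_def min_def field_simps)
    show "\<exists>x'\<in>complex_of_real ` {a<..<b}. x' \<noteq> complex_of_real m \<and> dist x' (complex_of_real m) < e"
    proof (rule bexI[of _ "complex_of_real (m + d)"])
      show "complex_of_real (m + d) \<in> complex_of_real ` {a<..<b}" using d by (intro imageI) auto
    qed (use d in \<open>auto simp: dist_norm\<close>)
  qed
  have "f (complex_of_real t) = 0"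
  proof (rule analytic_continuation[OF hol open_UNIV connected_UNIV subset_UNIV UNIV_I lim])
    show "z \<in> complex_of_real ` {a<..<b} \<Longrightarrow> f z = 0" for z
      using F real_eq by auto
  qed simp
  then show ?thesis using real_eq by simp
qed

lemma cmod_sq_expand: "(cmod (A + d * B))\<^sup>2 = (cmod A)\<^sup>2 + 2 * Re (cnj A * d * B) + (cmod (d * B))\<^sup>2"
  by (simp only: cmod_power2) (simp add: algebra_simps power2_eq_square)

lemma phase_retrieval:
  fixes A1 A2 B \<tau>1 \<tau>2 \<tau>3 :: complex
  assumes B: "B \<noteq> 0"
    and ind: "\<forall>a b::real. a *\<^sub>R (\<tau>2 - \<tau>1) + b *\<^sub>R (\<tau>3 - \<tau>1) = 0 \<longrightarrow> a = 0 \<and> b = 0"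
    and e1: "cmod (A1 + \<tau>1 * B) = cmod (A2 + \<tau>1 * B)"
    and e2: "cmod (A1 + \<tau>2 * B) = cmod (A2 + \<tau>2 * B)"
    and e3: "cmod (A1 + \<tau>3 * B) = cmod (A2 + \<tau>3 * B)"
  shows "A1 = A2"
proof -
  define P1 where "P1 = A1 + \<tau>1 * B"
  define P2 where "P2 = A2 + \<tau>1 * B"
  define d2 where "d2 = \<tau>2 - \<tau>1"
  define d3 where "d3 = \<tau>3 - \<tau>1"
  have f2: "A1 + \<tau>2 * B = P1 + d2 * B" "A2 + \<tau>2 * B = P2 + d2 * B"
    "A1 + \<tau>3 * B = P1 + d3 * B" "A2 + \<tau>3 * B = P2 + d3 * B"
    by (simp_all add: P1_def P2_def d2_def d3_def algebra_simps)
  have n0: "cmod P1 = cmod P2" using e1 by (simp add: P1_def P2_def)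
  have r: "Re (cnj P1 * d * B) = Re (cnj P2 * d * B)"
    if "cmod (P1 + d * B) = cmod (P2 + d * B)" for d
  proof -
    have "(cmod (P1 + d * B))\<^sup>2 = (cmod (P2 + d * B))\<^sup>2" using that by simp
    then show ?thesis unfolding cmod_sq_expand using n0 by simp
  qed
  define z where "z = cnj (P1 - P2) * B"
  have z2: "Re (z * d2) = 0" using r[of d2] e2 f2 by (simp add: z_def algebra_simps)
  have z3: "Re (z * d3) = 0" using r[of d3] e3 f2 by (simp add: z_def algebra_simps)
  have d2n: "d2 \<noteq> 0"
  proof
    assume "d2 = 0"
    then have "1 *\<^sub>R (\<tau>2 - \<tau>1) + 0 *\<^sub>R (\<tau>3 - \<tau>1) = 0" by (simp add: d2_def)
    from ind[rule_format, OF this] show False by simp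
  qed
  have "z = 0"
  proof (rule ccontr)
    assume zn: "z \<noteq> 0"
    define s where "s = Im (z * d2)"
    define t where "t = Im (z * d3)"
    have zs: "z * d2 = \<i> * of_real s" using z2 by (simp add: s_def complex_eq_iff)
    have zt: "z * d3 = \<i> * of_real t" using z3 by (simp add: t_def complex_eq_iff)
    have "z * (t *\<^sub>R d2 + (- s) *\<^sub>R d3) = of_real t * (z * d2) - of_real s * (z * d3)"
      unfolding scaleR_conv_of_real of_real_minus by algebra
    also have "\<dots> = 0" unfolding zs zt by simp
    finally have "z * (t *\<^sub>R d2 + (- s) *\<^sub>R d3) = 0" .
    then have "t *\<^sub>R d2 + (- s) *\<^sub>R d3 = 0" using zn by simp
    then have "t = 0 \<and> - s = 0" using ind[rule_format, of t "-s"] by (simp add: d2_def d3_def)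
    then have "z * d2 = 0" using zs by simp
    then show False using zn d2n by simp
  qed
  then have "P1 = P2" using B by (simp add: z_def)
  then show ?thesis by (simp add: P1_def P2_def)
qed

lemma interval_sub:
  fixes B1 B2 :: "real set"
  assumes B1: "B1 = {} \<or> (\<exists>c d. c < d \<and> B1 = {c..d})"
    and B2c: "closed B2"
    and ae: "AE x in lebesgue. x \<in> B1 \<longrightarrow> x \<in> B2"
  shows "B1 \<subseteq> B2"
  using B1
proof
  assume "\<exists>c d. c < d \<and> B1 = {c..d}"
  then obtain c d where cd: "c < d" "B1 = {c..d}" by blast
  have "{c<..<d} \<subseteq> B2"
  proof
    fix x assume x: "x \<in> {c<..<d}"
    show "x \<in> B2"
    proof (rule mem_closed_if_AE_lebesgue_open[OF open_greaterThanLessThan B2c _ x])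
      show "AE x \<in> {c<..<d} in lebesgue. x \<in> B2"
        using ae by eventually_elim (auto simp: cd)
    qed
  qed
  then have "closure {c<..<d} \<subseteq> B2" using B2c by (rule closure_minimal)
  then show ?thesis using cd by simp
qed simp

lemma intervals_eq:
  fixes B1 B2 :: "real set" and w1 w2 :: "real \<Rightarrow> complex"
  assumes B1: "B1 = {} \<or> (\<exists>c d. c < d \<and> B1 = {c..d})"
    and B2: "B2 = {} \<or> (\<exists>c d. c < d \<and> B2 = {c..d})"
    and z1: "AE x in lborel. x \<notin> B1 \<longrightarrow> w1 x = 0"
    and z2: "AE x in lborel. x \<notin> B2 \<longrightarrow> w2 x = 0"
    and n1: "{x. x \<in> B1 \<and> w1 x = 0} \<in> null_sets lebesgue"
    and n2: "{x. x \<in> B2 \<and> w2 x = 0} \<in> null_sets lebesgue"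
    and eq: "AE x in lborel. w1 x = w2 x"
  shows "B1 = B2"
proof -
  have cl: "closed B" if "B = {} \<or> (\<exists>c d. c < d \<and> B = {c..d})" for B :: "real set"
    using that by auto
  have a1: "AE x in lebesgue. x \<notin> {x. x \<in> B1 \<and> w1 x = 0}" by (rule AE_not_in[OF n1])
  have a2: "AE x in lebesgue. x \<notin> {x. x \<in> B2 \<and> w2 x = 0}" by (rule AE_not_in[OF n2])
  have "AE x in lebesgue. x \<in> B1 \<longleftrightarrow> x \<in> B2"
    using a1 a2 AE_completion[OF z1] AE_completion[OF z2] AE_completion[OF eq]
    by eventually_elim auto
  then have "AE x in lebesgue. x \<in> B1 \<longrightarrow> x \<in> B2" "AE x in lebesgue. x \<in> B2 \<longrightarrow> x \<in> B1"
    by (auto elim: eventually_mono)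
  then show ?thesis
    using interval_sub[OF B1 cl[OF B2]] interval_sub[OF B2 cl[OF B1]] by blast
qed

definition P3 :: "real \<times> (real \<times> real) \<Rightarrow> real^3" where
  "P3 x = vector [fst x, fst (snd x), snd (snd x)]"

lemma Basis_real3: "(Basis :: (real^3) set) = {axis 1 1, axis 2 1, axis 3 1}"
  by (auto simp: Basis_vec_def UNIV_3)

lemma P3_measurable[measurable]: "P3 \<in> borel_measurable borel"
proof -
  have "linear P3" unfolding P3_def
    by (intro linearI) (auto simp: vec_eq_iff forall_3 vector_3)
  then show ?thesis by (intro borel_measurable_continuous_onI linear_continuous_on) (simp add: linear_conv_bounded_linear[symmetric])
qed

lemma distr_P3: "distr lborel borel P3 = lborel"
proof (rule lborel_eqI[symmetric])
  fix l u :: "real^3"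
  assume lu: "\<And>b. b \<in> Basis \<Longrightarrow> l \<bullet> b \<le> u \<bullet> b"
  have lu': "l $ i \<le> u $ i" for i using lu[of "axis i 1"] by (auto simp: Basis_vec_def inner_axis)
  have pre: "P3 -` box l u = {l$1<..<u$1} \<times> ({l$2<..<u$2} \<times> {l$3<..<u$3})"
    by (auto simp: P3_def mem_box_cart forall_3 vector_3)
  have B23: "emeasure lborel ({l$2<..<u$2} \<times> {l$3<..<u$3}) = emeasure lborel {l$2<..<u$2} * emeasure lborel {l$3<..<u$3}"
    by (simp only: lborel_prod[symmetric])
      (rule sigma_finite_measure.emeasure_pair_measure_Times[OF sigma_finite_lborel], auto)
  have "emeasure (distr lborel borel P3) (box l u) = emeasure lborel (P3 -` box l u)"
    by (subst emeasure_distr) auto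
  also have "\<dots> = emeasure (lborel \<Otimes>\<^sub>M lborel) ({l$1<..<u$1} \<times> ({l$2<..<u$2} \<times> {l$3<..<u$3}))"
    by (simp only: pre lborel_prod)
  also have "\<dots> = emeasure lborel {l$1<..<u$1} * emeasure lborel ({l$2<..<u$2} \<times> {l$3<..<u$3})"
    by (rule sigma_finite_measure.emeasure_pair_measure_Times[OF sigma_finite_lborel])
       (auto intro!: borel_open open_Times)
  also have "\<dots> = ennreal ((u$1 - l$1) * (u$2 - l$2) * (u$3 - l$3))"
    using lu' B23 by (simp add: ennreal_mult mult.assoc)
  also have "\<dots> = (\<Prod>b\<in>Basis. (u - l) \<bullet> b)"
    by (simp add: Basis_real3 axis_eq_axis inner_axis mult.assoc)
  finally show "emeasure (distr lborel borel P3) (box l u) = (\<Prod>b\<in>Basis. (u - l) \<bullet> b)" .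
qed simp

lemma distr_orth:
  fixes U :: "real^3 \<Rightarrow> real^3"
  assumes U: "orthogonal_transformation U"
  shows "distr lborel borel U = lborel"
proof (rule lborel_eqI[symmetric])
  have lin: "linear U" using U by (rule orthogonal_transformation_linear)
  have Um[measurable]: "U \<in> borel_measurable borel"
    using lin by (intro borel_measurable_continuous_onI linear_continuous_on) (simp add: linear_conv_bounded_linear[symmetric])
  fix l u :: "real^3"
  assume lu: "\<And>b. b \<in> Basis \<Longrightarrow> l \<bullet> b \<le> u \<bullet> b"
  have V: "orthogonal_transformation (inv U)" by (rule orthogonal_transformation_inv[OF U])
  have pre: "U -` box l u = inv U ` box l u"
    by (rule bij_vimage_eq_inv_image[OF orthogonal_transformation_bij[OF U]])
  have bm: "U -` box l u \<in> sets lborel"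
    using measurable_sets_borel[OF Um, of "box l u"] by simp
  have lm: "inv U ` box l u \<in> lmeasurable"
    by (rule measurable_orthogonal_image[OF V lmeasurable_box])
  have "emeasure (distr lborel borel U) (box l u) = emeasure lborel (U -` box l u)"
    by (subst emeasure_distr) auto
  also have "\<dots> = emeasure lebesgue (U -` box l u)"
    using bm by simp
  also have "\<dots> = ennreal (measure lebesgue (inv U ` box l u))"
    unfolding pre using lm by (simp add: emeasure_eq_measure2)
  also have "\<dots> = ennreal (measure lebesgue (box l u))"
    by (simp add: measure_orthogonal_image[OF V lmeasurable_box])
  also have "\<dots> = emeasure lebesgue (box l u)"
    using lmeasurable_box by (simp add: emeasure_eq_measure2)
  also have "\<dots> = emeasure lborel (box l u)" by simp
  also have "\<dots> = (\<Prod>b\<in>Basis. (u - l) \<bullet> b)" using lu by simp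
  finally show "emeasure (distr lborel borel U) (box l u) = (\<Prod>b\<in>Basis. (u - l) \<bullet> b)" .
qed simp


definition Um :: "real^3 \<Rightarrow> real^3 \<Rightarrow> real^3 \<Rightarrow> real^3 \<Rightarrow> real^3" where
  "Um x0 l m v = (- (v$1)) *\<^sub>R x0 + (v$2) *\<^sub>R l + (v$3) *\<^sub>R m"

definition Tm :: "real^3 \<Rightarrow> real^3 \<Rightarrow> real^3 \<Rightarrow> real \<times> (real \<times> real) \<Rightarrow> real^3" where
  "Tm x0 l m p = (- fst p) *\<^sub>R x0 + fst (snd p) *\<^sub>R l + snd (snd p) *\<^sub>R m"

definition orthonormal3 :: "real^3 \<Rightarrow> real^3 \<Rightarrow> real^3 \<Rightarrow> bool" where
  "orthonormal3 x0 l m \<longleftrightarrow> x0 \<bullet> x0 = 1 \<and> l \<bullet> l = 1 \<and> m \<bullet> m = 1 \<and> x0 \<bullet> l = 0 \<and> x0 \<bullet> m = 0 \<and> l \<bullet> m = 0"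

lemma orth_Um:
  assumes "orthonormal3 x0 l m"
  shows "orthogonal_transformation (Um x0 l m)"
  unfolding orthogonal_transformation_def
proof
  show "linear (Um x0 l m)"
    by (intro linearI) (simp_all add: Um_def algebra_simps)
  have o: "x0 \<bullet> x0 = 1" "l \<bullet> l = 1" "m \<bullet> m = 1" "x0 \<bullet> l = 0" "x0 \<bullet> m = 0" "l \<bullet> m = 0"
    "l \<bullet> x0 = 0" "m \<bullet> x0 = 0" "m \<bullet> l = 0"
    using assms by (auto simp: orthonormal3_def inner_commute)
  show "\<forall>v w. Um x0 l m v \<bullet> Um x0 l m w = v \<bullet> w"
  proof (intro allI)
    fix v w :: "real^3"
    have vw: "v \<bullet> w = v$1*w$1 + v$2*w$2 + v$3*w$3" by (simp add: inner_vec_def sum_3)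
    show "Um x0 l m v \<bullet> Um x0 l m w = v \<bullet> w"
      unfolding vw Um_def by (simp add: inner_add_left inner_add_right inner_diff_left inner_diff_right o algebra_simps)
  qed
qed

lemma Tm_eq: "Tm x0 l m = Um x0 l m \<circ> P3"
  by (auto simp: fun_eq_iff Tm_def Um_def P3_def vector_3)

lemma Tm_measurable[measurable]: "Tm x0 l m \<in> borel_measurable borel"
  unfolding Tm_def by (intro borel_measurable_continuous_onI) (intro continuous_intros)

lemma Tm_measurable'[measurable]: "Tm x0 l m \<in> measurable lborel borel"
  using Tm_measurable by simp

lemma distr_Tm:
  assumes "orthonormal3 x0 l m"
  shows "distr lborel borel (Tm x0 l m) = lborel"
proof -
  have lin: "linear (Um x0 l m)" using orth_Um[OF assms] by (rule orthogonal_transformation_linear)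
  have Um[measurable]: "Um x0 l m \<in> borel_measurable borel"
    using lin by (intro borel_measurable_continuous_onI linear_continuous_on) (simp add: linear_conv_bounded_linear[symmetric])
  have "distr lborel borel (Tm x0 l m) = distr (distr lborel borel P3) borel (Um x0 l m)"
    by (subst distr_distr) (auto simp: Tm_eq)
  also have "\<dots> = lborel" by (simp add: distr_P3 distr_orth[OF orth_Um[OF assms]])
  finally show ?thesis .
qed

lemma x0_Tm:
  assumes "orthonormal3 x0 l m"
  shows "x0 \<bullet> Tm x0 l m p = - fst p" "Tm x0 l m p \<bullet> x0 = - fst p"
  using assms by (auto simp: Tm_def orthonormal3_def inner_add_right inner_add_left inner_diff_left inner_diff_right inner_commute)

lemma fubini_Tm:
  fixes h :: "real^3 \<Rightarrow> complex"
  assumes on: "orthonormal3 x0 l m" and ih: "integrable lborel h"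
  shows "integrable lborel (\<lambda>a. LINT st|lborel. h (Tm x0 l m (a, st)))"
    and "(LINT y|lborel. h y) = (LINT a|lborel. LINT st|lborel. h (Tm x0 l m (a, st)))"
proof -
  have hm: "h \<in> borel_measurable borel" using ih by auto
  have i: "integrable (lborel :: (real \<times> (real \<times> real)) measure) (\<lambda>p. h (Tm x0 l m p))"
    using integrable_distr_eq[OF Tm_measurable'[of x0 l m] hm] ih unfolding distr_Tm[OF on] by simp
  then have i': "integrable (lborel \<Otimes>\<^sub>M lborel) (\<lambda>p. h (Tm x0 l m p))" unfolding lborel_prod .
  show "integrable lborel (\<lambda>a. LINT st|lborel. h (Tm x0 l m (a, st)))"
    using lborel_pair.integrable_fst'[OF i'] by simp
  have "(LINT y|lborel. h y) = integral\<^sup>L (distr lborel borel (Tm x0 l m)) h"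
    unfolding distr_Tm[OF on] ..
  also have "\<dots> = integral\<^sup>L lborel (\<lambda>p. h (Tm x0 l m p))"
    by (rule integral_distr[OF Tm_measurable'[of x0 l m] hm])
  also have "\<dots> = integral\<^sup>L (lborel \<Otimes>\<^sub>M lborel) (\<lambda>p. h (Tm x0 l m p))" unfolding lborel_prod ..
  also have "\<dots> = (LINT a|lborel. LINT st|lborel. h (Tm x0 l m (a, st)))"
    using lborel_pair.integral_fst'[OF i'] by simp
  finally show "(LINT y|lborel. h y) = (LINT a|lborel. LINT st|lborel. h (Tm x0 l m (a, st)))" .
qed

lemma AE_Tm:
  assumes on: "orthonormal3 x0 l m" and Q: "AE y in lborel. Q y" and Qm: "{y. Q y} \<in> sets borel"
  shows "AE a in lborel. AE st in lborel. Q (Tm x0 l m (a, st))"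
proof -
  have "AE y in distr lborel borel (Tm x0 l m). Q y" unfolding distr_Tm[OF on] by (rule Q)
  then have "AE p in lborel. Q (Tm x0 l m p)"
    by (subst (asm) AE_distr_iff[OF Tm_measurable'[of x0 l m]]) (use Qm in auto)
  then have "AE p in lborel \<Otimes>\<^sub>M lborel. Q (Tm x0 l m p)" unfolding lborel_prod .
  then show ?thesis by (rule lborel_pair.AE_pair)
qed

lemma esssupp_ae:
  assumes Jm[measurable]: "J \<in> borel_measurable lborel"
  shows "AE y in lborel. y \<notin> esssupp J \<longrightarrow> J y = 0"
proof -
  define F where "F = {ball x e | x e. 0 < e \<and> emeasure lborel {y \<in> ball x e. J y \<noteq> 0} = 0}"
  have "\<And>S. S \<in> F \<Longrightarrow> open S" unfolding F_def by auto
  then obtain F' where F': "F' \<subseteq> F" "countable F'" "\<Union>F' = \<Union>F" by (rule Lindelof)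
  have cov: "- esssupp J \<subseteq> \<Union>F"
  proof
    fix x assume "x \<in> - esssupp J"
    then obtain e where "0 < e" "emeasure lborel {y \<in> ball x e. J y \<noteq> 0} = 0"
      unfolding esssupp_def by auto
    then have "ball x e \<in> F" unfolding F_def by blast
    then show "x \<in> \<Union>F" using \<open>0 < e\<close> by (meson UnionI centre_in_ball)
  qed
  have nB: "{y \<in> B. J y \<noteq> 0} \<in> null_sets lborel" if "B \<in> F'" for B
  proof -
    from that F' obtain x e where B: "B = ball x e" "emeasure lborel {y \<in> ball x e. J y \<noteq> 0} = 0"
      unfolding F_def by blast
    have "{y \<in> ball x e. J y \<noteq> 0} \<in> sets lborel" by measurable
    then show ?thesis using B by (auto intro: null_setsI)
  qed
  have N: "(\<Union>B\<in>F'. {y \<in> B. J y \<noteq> 0}) \<in> null_sets lborel"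
    by (rule null_sets_UN'[OF F'(2) nB])
  show ?thesis
  proof (rule AE_I'[OF N])
    show "{y \<in> space lborel. \<not> (y \<notin> esssupp J \<longrightarrow> J y = 0)} \<subseteq> (\<Union>B\<in>F'. {y \<in> B. J y \<noteq> 0})"
      using cov F'(3) by blast
  qed
qed

lemma esssupp_not_flat:
  fixes x0 :: "real^3"
  assumes Jm[measurable]: "J \<in> borel_measurable lborel" and x: "x \<in> esssupp J" and x0: "x0 \<noteq> 0"
  shows "\<not> esssupp J \<subseteq> {y. x0 \<bullet> y = c}"
proof
  assume sub: "esssupp J \<subseteq> {y. x0 \<bullet> y = c}"
  have "negligible {y. x0 \<bullet> y = c}" using x0 by (intro negligible_hyperplane) simp
  then have "{y. x0 \<bullet> y = c} \<in> null_sets lebesgue" by (simp add: negligible_iff_null_sets)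
  moreover have Hb: "{y. x0 \<bullet> y = c} \<in> sets lborel" by measurable
  ultimately have H: "{y. x0 \<bullet> y = c} \<in> null_sets lborel"
    using null_sets_completion_iff by blast
  have A: "{y \<in> ball x 1. J y \<noteq> 0} \<in> sets lborel" by measurable
  have "AE y in lborel. y \<notin> {y \<in> ball x 1. J y \<noteq> 0}"
    using esssupp_ae[OF Jm] AE_not_in[OF H] by eventually_elim (use sub in auto)
  then have "{y \<in> ball x 1. J y \<noteq> 0} \<in> null_sets lborel"
    using AE_iff_null_sets[OF A] by simp
  then have "emeasure lborel {y \<in> ball x 1. J y \<noteq> 0} = 0" by auto
  moreover have "emeasure lborel {y \<in> ball x 1. J y \<noteq> 0} \<noteq> 0"
    using x unfolding esssupp_def by auto
  ultimately show False by simp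
qed

lemma cdot_scale: "cdot m (c *s v) = c * cdot m v"
  by (simp add: cdot_def sum_distrib_left algebra_simps)

lemma cdot_diff: "cdot m (v - w) = cdot m v - cdot m w"
  by (simp add: cdot_def sum_subtractf algebra_simps)

lemma cdot_add: "cdot m (v + w) = cdot m v + cdot m w"
  by (simp add: cdot_def sum.distrib algebra_simps)

lemma cdot_cvec: "cdot m (cvec a) = complex_of_real (m \<bullet> a)"
  by (simp add: cdot_def cvec_def inner_vec_def)

lemma bounded_linear_cdot: "bounded_linear (cdot m)"
  unfolding cdot_def
  by (intro bounded_linear_sum bounded_linear_compose[OF bounded_linear_mult_right bounded_linear_vec_nth])

lemma norm_vsm: "norm (c *s (v :: complex^3)) = norm c * norm v"
proof -
  have "norm (c *s v) = sqrt (\<Sum>i\<in>UNIV. (norm c * norm (v $ i))\<^sup>2)"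
    by (simp add: norm_vec_def L2_set_def norm_mult)
  also have "\<dots> = sqrt ((norm c)\<^sup>2 * (\<Sum>i\<in>UNIV. (norm (v $ i))\<^sup>2))"
    by (simp add: power_mult_distrib sum_distrib_left)
  also have "\<dots> = norm c * norm v"
    by (simp add: real_sqrt_mult norm_vec_def L2_set_def)
  finally show ?thesis .
qed

lemma vsm_measurable[measurable]:
  fixes c :: "'a \<Rightarrow> complex" and J :: "'a \<Rightarrow> complex^3"
  assumes [measurable]: "c \<in> borel_measurable M" "J \<in> borel_measurable M"
  shows "(\<lambda>y. c y *s J y) \<in> borel_measurable M"
proof (rule borel_measurable_continuous_Pair[where H="\<lambda>a v. a *s v"])
  show "continuous_on UNIV (\<lambda>x. fst x *s snd x :: complex^3)"
    unfolding vector_scalar_mult_def by (intro continuous_intros)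
qed simp_all

lemma source_integrable:
  assumes "source J"
  shows "integrable lborel J"
proof -
  from assms have Jm[measurable]: "J \<in> borel_measurable lborel" and C: "\<exists>C. AE y in lborel. norm (J y) \<le> C"
    and D: "compact (esssupp J)" unfolding source_def by auto
  from C obtain C where C: "AE y in lborel. norm (J y) \<le> C" by blast
  have Db: "esssupp J \<in> sets lborel" using D by (simp add: compact_imp_closed)
  have "integrable lborel (\<lambda>y. C * indicator (esssupp J) y :: real)"
    using Db emeasure_compact_finite[OF D] by (intro integrable_mult_right integrable_real_indicator) auto
  then show ?thesis
  proof (rule Bochner_Integration.integrable_bound)
    show "AE y in lborel. norm (J y) \<le> norm (C * indicator (esssupp J) y :: real)"
      using C esssupp_ae[OF Jm] by eventually_elim (auto simp: indicator_def)
  qed simp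
qed

lemma integrable_vsm:
  fixes c :: "real^3 \<Rightarrow> complex" and J :: "real^3 \<Rightarrow> complex^3"
  assumes "integrable lborel J" "c \<in> borel_measurable lborel" "\<And>y. norm (c y) \<le> 1"
  shows "integrable lborel (\<lambda>y. c y *s J y)"
  using assms(1)
proof (rule Bochner_Integration.integrable_bound)
  have Jm: "J \<in> borel_measurable lborel" using assms(1) by auto
  show "(\<lambda>y. c y *s J y) \<in> borel_measurable lborel" by (rule vsm_measurable[OF assms(2) Jm])
  show "AE y in lborel. norm (c y *s J y) \<le> norm (J y)"
    using assms(3) by (auto simp: norm_vsm intro!: mult_left_le_one_le)
qed

lemma strip_iff_plane: "y \<in> strip x0 J \<longleftrightarrow> plane x0 (- (y \<bullet> x0)) \<subseteq> strip x0 J"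
  by (auto simp: strip_def plane_def)

lemma plane_sub_strip_of_mem:
  assumes "z \<in> esssupp J" "z \<bullet> x0 = - a"
  shows "plane x0 a \<subseteq> strip x0 J"
proof
  fix y assume "y \<in> plane x0 a"
  then have yz: "y \<bullet> x0 = z \<bullet> x0" using assms(2) by (simp add: plane_def)
  have "(INF z\<in>esssupp J. ereal (z \<bullet> x0)) \<le> ereal (z \<bullet> x0)" by (rule INF_lower[OF assms(1)])
  moreover have "ereal (z \<bullet> x0) \<le> (SUP z\<in>esssupp J. ereal (z \<bullet> x0))" by (rule SUP_upper[OF assms(1)])
  ultimately show "y \<in> strip x0 J" by (simp add: strip_def yz)
qed

lemma Bset_shape:
  assumes x0: "x0 \<bullet> x0 = 1" and J: "source J"
  shows "{a. plane x0 a \<subseteq> strip x0 J} = {} \<or> (\<exists>c d. c < d \<and> {a. plane x0 a \<subseteq> strip x0 J} = {c..d})"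
proof -
  have Jm: "J \<in> borel_measurable lborel" and D: "compact (esssupp J)" using J by (auto simp: source_def)
  have pl: "(- a) *\<^sub>R x0 \<in> plane x0 a" for a using x0 by (simp add: plane_def)
  show ?thesis
  proof (cases "esssupp J = {}")
    case True
    then have "strip x0 J = {}" by (simp add: strip_def top_ereal_def bot_ereal_def)
    then show ?thesis using pl by blast
  next
    case False
    define S where "S = (\<lambda>z. z \<bullet> x0) ` esssupp J"
    have cS: "compact S" unfolding S_def
      by (rule compact_continuous_image[OF _ D]) (intro continuous_intros)
    have nS: "S \<noteq> {}" using False by (simp add: S_def)
    obtain a where a: "a \<in> S" "\<And>t. t \<in> S \<Longrightarrow> a \<le> t" using compact_attains_inf[OF cS nS] by blast
    obtain b where b: "b \<in> S" "\<And>t. t \<in> S \<Longrightarrow> t \<le> b" using compact_attains_sup[OF cS nS] by blast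
    have INF: "(INF z\<in>esssupp J. ereal (z \<bullet> x0)) = ereal a"
    proof (rule antisym)
      from a(1) obtain z where "z \<in> esssupp J" "a = z \<bullet> x0" by (auto simp: S_def)
      then show "(INF z\<in>esssupp J. ereal (z \<bullet> x0)) \<le> ereal a" by (metis INF_lower)
      show "ereal a \<le> (INF z\<in>esssupp J. ereal (z \<bullet> x0))"
        by (rule INF_greatest) (use a(2) in \<open>auto simp: S_def\<close>)
    qed
    have SUP: "(SUP z\<in>esssupp J. ereal (z \<bullet> x0)) = ereal b"
    proof (rule antisym)
      from b(1) obtain z where "z \<in> esssupp J" "b = z \<bullet> x0" by (auto simp: S_def)
      then show "ereal b \<le> (SUP z\<in>esssupp J. ereal (z \<bullet> x0))" by (metis SUP_upper)
      show "(SUP z\<in>esssupp J. ereal (z \<bullet> x0)) \<le> ereal b"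
        by (rule SUP_least) (use b(2) in \<open>auto simp: S_def\<close>)
    qed
    have st: "strip x0 J = {y. a \<le> y \<bullet> x0 \<and> y \<bullet> x0 \<le> b}"
      by (simp add: strip_def INF SUP)
    have B: "{a'. plane x0 a' \<subseteq> strip x0 J} = {-b..-a}"
    proof (intro set_eqI iffI)
      fix a' assume "a' \<in> {a'. plane x0 a' \<subseteq> strip x0 J}"
      then have "(- a') *\<^sub>R x0 \<in> strip x0 J" using pl by blast
      then show "a' \<in> {-b..-a}" using x0 by (simp add: st)
    next
      fix a' assume "a' \<in> {-b..-a}"
      then show "a' \<in> {a'. plane x0 a' \<subseteq> strip x0 J}"
        by (auto simp: st plane_def)
    qed
    have "a < b"
    proof (rule ccontr)
      assume "\<not> a < b"
      then have "esssupp J \<subseteq> {y. x0 \<bullet> y = a}"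
        using a(2) b(2) by (force simp: S_def inner_commute)
      moreover obtain x where "x \<in> esssupp J" using False by blast
      moreover have "x0 \<noteq> 0" using x0 by auto
      ultimately show False using esssupp_not_flat[OF Jm] by blast
    qed
    then show ?thesis using B by (intro disjI2 exI[of _ "-b"] exI[of _ "-a"]) auto
  qed
qed

lemma source_facts:
  assumes on: "orthonormal3 x0 l m" and J: "source J"
  shows "integrable lborel (Jhat x0 l m J)"
    and "\<And>k. cdot m (LINT y|lborel. exp (- \<i> * complex_of_real (k * (x0 \<bullet> y))) *s J y)
           = (CLINT a|lborel. iexp (k * a) * Jhat x0 l m J a)"
    and "AE a in lborel. a \<notin> {a. plane x0 a \<subseteq> strip x0 J} \<longrightarrow> Jhat x0 l m J a = 0"
proof -
  have Jm[measurable]: "J \<in> borel_measurable lborel" and D: "compact (esssupp J)"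
    using J by (auto simp: source_def)
  have iJ: "integrable lborel J" by (rule source_integrable[OF J])
  define f where "f y = cdot m (J y)" for y
  have if_: "integrable lborel f" unfolding f_def
    by (rule integrable_bounded_linear[OF bounded_linear_cdot iJ])
  have fm[measurable]: "f \<in> borel_measurable lborel" using if_ by auto
  have Jh: "Jhat x0 l m J a = (LINT st|lborel. f (Tm x0 l m (a, st)))" for a
    by (simp add: Jhat_def Tm_def f_def)
  show "integrable lborel (Jhat x0 l m J)"
    unfolding Jh[abs_def] by (rule fubini_Tm(1)[OF on if_])
  show "cdot m (LINT y|lborel. exp (- \<i> * complex_of_real (k * (x0 \<bullet> y))) *s J y)
           = (CLINT a|lborel. iexp (k * a) * Jhat x0 l m J a)" for k
  proof -
    define e where "e y = exp (- \<i> * complex_of_real (k * (x0 \<bullet> y)))" for y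
    have em[measurable]: "e \<in> borel_measurable lborel" unfolding e_def by measurable
    have en: "norm (e y) = 1" for y unfolding e_def by simp
    have i1: "integrable lborel (\<lambda>y. e y *s J y)"
      by (rule integrable_vsm[OF iJ em]) (simp add: en)
    have i2: "integrable lborel (\<lambda>y. e y * f y)"
      using if_
    proof (rule Bochner_Integration.integrable_bound)
      show "(\<lambda>y. e y * f y) \<in> borel_measurable lborel" by measurable
      show "AE y in lborel. norm (e y * f y) \<le> norm (f y)" by (simp add: norm_mult en)
    qed
    have "cdot m (LINT y|lborel. e y *s J y) = (LINT y|lborel. cdot m (e y *s J y))"
      by (rule integral_bounded_linear[OF bounded_linear_cdot i1, symmetric])
    also have "\<dots> = (LINT y|lborel. e y * f y)" by (simp add: cdot_scale f_def)
    also have "\<dots> = (LINT a|lborel. LINT st|lborel. e (Tm x0 l m (a, st)) * f (Tm x0 l m (a, st)))"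
      by (rule fubini_Tm(2)[OF on i2])
    also have "\<dots> = (LINT a|lborel. iexp (k * a) * Jhat x0 l m J a)"
    proof (rule Bochner_Integration.integral_cong[OF refl])
      fix a
      have "e (Tm x0 l m (a, st)) = iexp (k * a)" for st
        unfolding e_def using x0_Tm(1)[OF on, of "(a, st)"] by simp
      then show "(LINT st|lborel. e (Tm x0 l m (a, st)) * f (Tm x0 l m (a, st))) = iexp (k * a) * Jhat x0 l m J a"
        by (simp add: Jh)
    qed
    finally show ?thesis by (simp add: e_def)
  qed
  have Qm: "{y. y \<notin> esssupp J \<longrightarrow> J y = 0} \<in> sets borel"
  proof -
    have "esssupp J \<in> sets borel" using D by (simp add: compact_imp_closed)
    then show ?thesis using Jm by measurable
  qed
  have "AE a in lborel. AE st in lborel. (Tm x0 l m (a, st) \<notin> esssupp J \<longrightarrow> J (Tm x0 l m (a, st)) = 0)"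
    by (rule AE_Tm[OF on esssupp_ae[OF Jm] Qm])
  then show "AE a in lborel. a \<notin> {a. plane x0 a \<subseteq> strip x0 J} \<longrightarrow> Jhat x0 l m J a = 0"
  proof eventually_elim
    case (elim a)
    show ?case
    proof
      assume na: "a \<notin> {a. plane x0 a \<subseteq> strip x0 J}"
      have nt: "Tm x0 l m (a, st) \<notin> esssupp J" for st
        using plane_sub_strip_of_mem[of "Tm x0 l m (a, st)" J x0 a] x0_Tm(2)[OF on, of "(a, st)"] na by auto
      have "AE st in lborel. f (Tm x0 l m (a, st)) = 0"
        using elim by eventually_elim (use nt in \<open>simp add: f_def cdot_def\<close>)
      then show "Jhat x0 l m J a = 0" unfolding Jh by (rule integral_eq_zero_AE)
    qed
  qed
qed

lemma frame_facts:
  fixes x0 q0 l m :: "real^3"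
  assumes "norm x0 = 1" "cross3 x0 q0 \<noteq> 0"
    and "l = (1 / norm (cross3 x0 q0)) *\<^sub>R cross3 x0 q0" and "m = cross3 x0 l"
  shows "orthonormal3 x0 l m"
proof -
  define c where "c = cross3 x0 q0"
  have cn: "norm c > 0" using assms(2) by (simp add: c_def)
  have x0x0: "x0 \<bullet> x0 = 1" using assms(1) by (simp add: dot_square_norm)
  have ll: "l \<bullet> l = 1" using cn by (simp add: assms(3) c_def[symmetric] dot_square_norm power2_eq_square)
  have x0l: "x0 \<bullet> l = 0" by (simp add: assms(3) dot_cross_self)
  have x0m: "x0 \<bullet> m = 0" by (simp add: assms(4) dot_cross_self)
  have lm: "l \<bullet> m = 0" by (simp add: assms(4) dot_cross_self inner_commute)
  have nl: "norm l = 1" using ll by (simp add: norm_eq_sqrt_inner)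
  have "(norm m)\<^sup>2 + (x0 \<bullet> l)\<^sup>2 = (norm x0 * norm l)\<^sup>2"
    unfolding assms(4) by (rule norm_cross_dot)
  then have "(norm m)\<^sup>2 = 1" using x0l nl assms(1) by simp
  then have mm: "m \<bullet> m = 1" by (simp add: dot_square_norm)
  show ?thesis using x0x0 ll mm x0l x0m lm by (simp add: orthonormal3_def)
qed

lemma cdot_far_field_dip:
  assumes on: "orthonormal3 x0 l m" and mx: "m = cross3 x0 l"
  shows "cdot m (far_field_dip eps mu z0 x0 k J \<tau> l)
    = (\<i> * complex_of_real (k / sqrt (eps * mu) * mu))
        * cdot m (LINT y|lborel. exp (- \<i> * complex_of_real (k * (x0 \<bullet> y))) *s J y)
      + \<tau> * (\<i> * complex_of_real k * exp (- \<i> * complex_of_real (k * (x0 \<bullet> z0))))"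
proof -
  have mx0: "m \<bullet> x0 = 0" and mm: "m \<bullet> m = 1" using on by (auto simp: orthonormal3_def inner_commute)
  show ?thesis
    unfolding far_field_dip_def far_field_def Let_def
    by (simp add: cdot_add cdot_diff cdot_scale cdot_cvec mx0 mx[symmetric] mm algebra_simps)
qed

theorem theorem4p2:
  fixes eps mu kmin kmax :: real
    and z0 x0 q0 l m :: "real^3"
    and \<tau>1 \<tau>2 \<tau>3 :: complex
    and J1 J2 :: "real^3 \<Rightarrow> complex^3"
  assumes "eps > 0" and "mu > 0"
    and "0 < kmin" and "kmin < kmax"
    and "\<tau>1 \<noteq> \<tau>2" and "\<tau>1 \<noteq> \<tau>3" and "\<tau>2 \<noteq> \<tau>3"
    and "\<forall>a b::real. a *\<^sub>R (\<tau>2 - \<tau>1) + b *\<^sub>R (\<tau>3 - \<tau>1) = 0 \<longrightarrow> a = 0 \<and> b = 0"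
    and "norm x0 = 1" and "norm q0 = 1" and "cross3 x0 q0 \<noteq> 0"
    and "l = (1 / norm (cross3 x0 q0)) *\<^sub>R cross3 x0 q0"
    and "m = cross3 x0 l"
    and "source J1" and "source J2"
    and "{\<alpha>. plane x0 \<alpha> \<subseteq> strip x0 J1 \<and> Jhat x0 l m J1 \<alpha> = 0} \<in> null_sets lebesgue"
    and "{\<alpha>. plane x0 \<alpha> \<subseteq> strip x0 J2 \<and> Jhat x0 l m J2 \<alpha> = 0} \<in> null_sets lebesgue"
    and "\<forall>k \<in> {kmin<..<kmax}. \<forall>\<tau> \<in> {\<tau>1, \<tau>2, \<tau>3}.
           cmod (cdot m (far_field_dip eps mu z0 x0 k J1 \<tau> l))
         = cmod (cdot m (far_field_dip eps mu z0 x0 k J2 \<tau> l))"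
  shows "strip x0 J1 = strip x0 J2"
proof -
  note A = assms
  have on: "orthonormal3 x0 l m" by (rule frame_facts[OF A(9) A(11) A(12) A(13)])
  have x0x0: "x0 \<bullet> x0 = 1" using on by (simp add: orthonormal3_def)
  define B1 where "B1 = {a. plane x0 a \<subseteq> strip x0 J1}"
  define B2 where "B2 = {a. plane x0 a \<subseteq> strip x0 J2}"
  define w1 where "w1 = Jhat x0 l m J1"
  define w2 where "w2 = Jhat x0 l m J2"
  define G1 where "G1 k = cdot m (LINT y|lborel. exp (- \<i> * complex_of_real (k * (x0 \<bullet> y))) *s J1 y)" for k
  define G2 where "G2 k = cdot m (LINT y|lborel. exp (- \<i> * complex_of_real (k * (x0 \<bullet> y))) *s J2 y)" for k
  have sh1: "B1 = {} \<or> (\<exists>c d. c < d \<and> B1 = {c..d})" unfolding B1_def by (rule Bset_shape[OF x0x0 A(14)])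
  have sh2: "B2 = {} \<or> (\<exists>c d. c < d \<and> B2 = {c..d})" unfolding B2_def by (rule Bset_shape[OF x0x0 A(15)])
  have iw1: "integrable lborel w1" unfolding w1_def by (rule source_facts(1)[OF on A(14)])
  have iw2: "integrable lborel w2" unfolding w2_def by (rule source_facts(1)[OF on A(15)])
  have G1e: "G1 k = (CLINT a|lborel. iexp (k * a) * w1 a)" for k
    unfolding G1_def w1_def by (rule source_facts(2)[OF on A(14)])
  have G2e: "G2 k = (CLINT a|lborel. iexp (k * a) * w2 a)" for k
    unfolding G2_def w2_def by (rule source_facts(2)[OF on A(15)])
  have z1: "AE a in lborel. a \<notin> B1 \<longrightarrow> w1 a = 0"
    unfolding B1_def w1_def by (rule source_facts(3)[OF on A(14)])
  have z2: "AE a in lborel. a \<notin> B2 \<longrightarrow> w2 a = 0"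
    unfolding B2_def w2_def by (rule source_facts(3)[OF on A(15)])
  have Geq: "G1 k = G2 k" if k: "kmin < k" "k < kmax" for k
  proof -
    define om where "om = \<i> * complex_of_real (k / sqrt (eps * mu) * mu)"
    define Bk where "Bk = \<i> * complex_of_real k * exp (- \<i> * complex_of_real (k * (x0 \<bullet> z0)))"
    have dip: "cdot m (far_field_dip eps mu z0 x0 k J \<tau> l) = om * cdot m (LINT y|lborel. exp (- \<i> * complex_of_real (k * (x0 \<bullet> y))) *s J y) + \<tau> * Bk" for J \<tau>
      unfolding om_def Bk_def by (rule cdot_far_field_dip[OF on A(13)])
    have kp: "0 < k" using k A(3) by simp
    have Bk0: "Bk \<noteq> 0" using kp by (simp add: Bk_def)
    have om0: "om \<noteq> 0" using kp A(1) A(2) by (simp add: om_def)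
    have e: "cmod (om * G1 k + \<tau> * Bk) = cmod (om * G2 k + \<tau> * Bk)" if "\<tau> \<in> {\<tau>1, \<tau>2, \<tau>3}" for \<tau>
    proof -
      have "cmod (cdot m (far_field_dip eps mu z0 x0 k J1 \<tau> l)) = cmod (cdot m (far_field_dip eps mu z0 x0 k J2 \<tau> l))"
        using A(18) k that by auto
      then show ?thesis unfolding dip G1_def G2_def .
    qed
    have "om * G1 k = om * G2 k"
      by (rule phase_retrieval[OF Bk0 A(8) e e e]) auto
    then show ?thesis using om0 by simp
  qed
  define w where "w a = w1 a - w2 a" for a
  have iw: "integrable lborel w" unfolding w_def using iw1 iw2 by simp
  have bd: "bounded (B1 \<union> B2)" using sh1 sh2 by auto
  then obtain R where R: "\<And>x. x \<in> B1 \<union> B2 \<Longrightarrow> norm x \<le> R" by (auto simp: bounded_iff)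
  have Rw: "AE x in lborel. R < \<bar>x\<bar> \<longrightarrow> w x = 0"
    using z1 z2 by eventually_elim (use R in \<open>force simp: w_def\<close>)
  have Fw: "(CLINT x|lborel. iexp (k * x) * w x) = 0" if "kmin < k" "k < kmax" for k
  proof -
    have "(CLINT x|lborel. iexp (k * x) * w x) = (CLINT x|lborel. iexp (k * x) * w1 x - iexp (k * x) * w2 x)"
      by (simp add: w_def algebra_simps)
    also have "\<dots> = G1 k - G2 k"
      unfolding G1e G2e by (rule Bochner_Integration.integral_diff[OF integrable_iexp_multc[OF iw1] integrable_iexp_multc[OF iw2]])
    also have "\<dots> = 0" using Geq[OF that] by simp
    finally show ?thesis .
  qed
  have "(CLINT x|lborel. iexp (t * x) * w x) = 0" for t
    by (rule fourier_interval_zero[OF iw Rw A(4) Fw])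
  then have "AE x in lborel. w x = 0" by (rule complex_fourier_zero[OF iw])
  then have eq: "AE x in lborel. w1 x = w2 x" by eventually_elim (simp add: w_def)
  have n1: "{x. x \<in> B1 \<and> w1 x = 0} \<in> null_sets lebesgue" using A(16) by (simp add: B1_def w1_def)
  have n2: "{x. x \<in> B2 \<and> w2 x = 0} \<in> null_sets lebesgue" using A(17) by (simp add: B2_def w2_def)
  have "B1 = B2" by (rule intervals_eq[OF sh1 sh2 z1 z2 n1 n2 eq])
  then show ?thesis
    by (auto simp: B1_def B2_def set_eq_iff strip_iff_plane[of _ x0 J1] strip_iff_plane[of _ x0 J2])
qed

end
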